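(* Let $1<K<n$, let $\|\cdot\|_s$ be a sign- and permutation-invariant norm on $\mathbb{R}^n$, and let $\|\cdot\|_c$ be the gauge of $\mathrm{conv}(N^K_{\|\cdot\|_s})$. Then for every $x\in\mathbb{R}^n$, $\|x\|_c=\|u(x)\|_s$.
   Context: A norm is sign- and permutation-invariant if $\|Px\|_s=\|x\|_s$ for every permutation matrix $P$ and $\|\bar x\|_s=\|x\|_s$ whenever $|\bar x|=|x|$ componentwise. $N^K_{\|\cdot\|_s}=\{x\in\mathbb{R}^n\mid\|x\|_s\le 1,\ \mathrm{card}(x)\le K\}$, where $\mathrm{card}(x)$ is the number of nonzero entries. $\mathrm{conv}(N^K_{\|\cdot\|_s})$ is a compact convex set, symmetric about 0, containing 0 in its interior, and its gauge $\|x\|_c=\min\{t>0\mid x/t\in\mathrm{conv}(N^K_{\|\cdot\|_s})\}$ is a norm. For $x\in\mathbb{R}^n$, with $|x|_{[i]}$ the $i$-th largest absolute value of entries of $x$: $s(x)_i=\frac{\sum_{j=i}^n|x|_{[j]}}{K-i+1}$ ($i=1,\dots,K$); $i_x$ is the smallest index in $\{1,\dots,K\}$ minimizing $s(x)_i$; $\delta(x)=s(x)_{i_x}$; $u(x)_i=|x|_{[i]}$ for $i<i_x$, $u(x)_i=\delta(x)$ for $i_x\le i\le K$, $u(x)_i=0$ for $i>K$. *)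

theory Defs
  imports "HOL-Analysis.Analysis" "HOL-Library.Multiset"
begin

text \<open>Vectors in R^n are modelled as real^'n for a finite index type 'n, n = CARD('n).\<close>

definition is_norm :: "(real^'n \<Rightarrow> real) \<Rightarrow> bool" where
  "is_norm N \<longleftrightarrow>
     (\<forall>x. N x = 0 \<longleftrightarrow> x = 0) \<and>
     (\<forall>x y. N (x + y) \<le> N x + N y) \<and>
     (\<forall>c x. N (c *\<^sub>R x) = \<bar>c\<bar> * N x)"

definition sign_perm_invariant :: "(real^'n \<Rightarrow> real) \<Rightarrow> bool" where
  "sign_perm_invariant N \<longleftrightarrow>
     (\<forall>p x. p permutes (UNIV :: 'n set) \<longrightarrow> N (\<chi> i. x $ p i) = N x) \<and>
     (\<forall>x y. (\<forall>i. \<bar>y $ i\<bar> = \<bar>x $ i\<bar>) \<longrightarrow> N y = N x)"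

definition vcard :: "real^'n \<Rightarrow> nat" where
  "vcard x = card {i. x $ i \<noteq> 0}"

definition NK :: "(real^'n \<Rightarrow> real) \<Rightarrow> nat \<Rightarrow> (real^'n) set" where
  "NK N K = {x. N x \<le> 1 \<and> vcard x \<le> K}"

definition gauge_c :: "(real^'n \<Rightarrow> real) \<Rightarrow> nat \<Rightarrow> real^'n \<Rightarrow> real" where
  "gauge_c N K x = Inf {t. t > 0 \<and> (1 / t) *\<^sub>R x \<in> convex hull (NK N K)}"

definition sorted_abs :: "real^'n \<Rightarrow> real list" where
  "sorted_abs x = rev (sorted_list_of_multiset (image_mset (\<lambda>i. \<bar>x $ i\<bar>) (mset_set UNIV)))"

text \<open>|x|_[i], the i-th largest absolute value, for i = 1..n.\<close>
definition absk :: "real^'n \<Rightarrow> nat \<Rightarrow> real" where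
  "absk x i = sorted_abs x ! (i - 1)"

definition s_fun :: "nat \<Rightarrow> real^'n \<Rightarrow> nat \<Rightarrow> real" where
  "s_fun K x i = (\<Sum>j = i..CARD('n). absk x j) / real (K - i + 1)"

definition i_x :: "nat \<Rightarrow> real^'n \<Rightarrow> nat" where
  "i_x K x = (LEAST i. i \<in> {1..K} \<and> (\<forall>j\<in>{1..K}. s_fun K x i \<le> s_fun K x j))"

definition delta :: "nat \<Rightarrow> real^'n \<Rightarrow> real" where
  "delta K x = s_fun K x (i_x K x)"

text \<open>u(x)_i for i = 1..n.\<close>
definition u_fun :: "nat \<Rightarrow> real^'n \<Rightarrow> nat \<Rightarrow> real" where
  "u_fun K x i = (if i < i_x K x then absk x i else if i \<le> K then delta K x else 0)"

text \<open>A fixed enumeration of the index type by 0..n-1 (any choice works, the norm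
  being permutation invariant).\<close>
definition idx :: "'n::finite \<Rightarrow> nat" where
  "idx = (SOME f. bij_betw f (UNIV :: 'n set) {..<CARD('n)})"

definition u_vec :: "nat \<Rightarrow> real^'n \<Rightarrow> real^'n" where
  "u_vec K x = (\<chi> j. u_fun K x (idx j + 1))"

end

theory Submission
  imports Defs
begin


lemma idx_bij: "bij_betw (idx::'n::finite \<Rightarrow> nat) UNIV {..<CARD('n)}"
proof -
  obtain h where h: "bij_betw h {0..<card (UNIV::'n set)} (UNIV::'n set)"
    using ex_bij_betw_nat_finite[of "UNIV::'n set"] by auto
  have "\<exists>f. bij_betw f (UNIV :: 'n set) {..<CARD('n)}"
    using bij_betw_inv_into[OF h] by (auto simp: atLeast0LessThan)
  then show ?thesis unfolding idx_def by (rule someI_ex)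
qed

lemma sorted_abs_length: "length (sorted_abs (x::real^'n)) = CARD('n)"
proof -
  have "length (sorted_abs x) = size (mset (sorted_abs x))" by simp
  also have "\<dots> = CARD('n)" by (simp add: sorted_abs_def)
  finally show ?thesis .
qed

lemma sorted_abs_mset: "mset (sorted_abs (x::real^'n)) = image_mset (\<lambda>i. \<bar>x $ i\<bar>) (mset_set UNIV)"
  by (simp add: sorted_abs_def)

lemma sorted_abs_dec:
  assumes "i \<le> j" "j < CARD('n)"
  shows "sorted_abs (x::real^'n) ! j \<le> sorted_abs x ! i"
proof -
  let ?L = "sorted_list_of_multiset (image_mset (\<lambda>i. \<bar>x $ i\<bar>) (mset_set (UNIV::'n set)))"
  have len: "length ?L = CARD('n)" using sorted_abs_length[of x] unfolding sorted_abs_def by simp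
  have "sorted ?L" by simp
  hence "?L ! (CARD('n) - Suc j) \<le> ?L ! (CARD('n) - Suc i)"
    using assms len by (intro sorted_nth_mono) auto
  thus ?thesis using assms len unfolding sorted_abs_def by (simp add: rev_nth)
qed

lemma sorted_abs_nonneg:
  assumes "j < CARD('n)"
  shows "0 \<le> sorted_abs (x::real^'n) ! j"
proof -
  have "sorted_abs x ! j \<in> set (sorted_abs x)" using assms sorted_abs_length nth_mem by metis
  hence "sorted_abs x ! j \<in> set_mset (mset (sorted_abs x))" by simp
  thus ?thesis unfolding sorted_abs_mset by auto
qed

lemma exists_sigma:
  fixes x :: "real^'n"
  shows "\<exists>\<sigma>::'n\<Rightarrow>nat. bij_betw \<sigma> (UNIV::'n set) {1..CARD('n)} \<and> (\<forall>j. \<bar>(x::real^'n) $ j\<bar> = absk x (\<sigma> j))"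
proof -
  define n where "n = CARD('n)"
  define L where "L = sorted_abs x"
  define ii where "ii = inv_into UNIV (idx::'n \<Rightarrow> nat)"
  have bi: "bij_betw idx (UNIV::'n set) {..<n}" using idx_bij n_def by auto
  have bii: "bij_betw ii {..<n} (UNIV::'n set)" unfolding ii_def by (rule bij_betw_inv_into[OF bi])
  define ys where "ys = map (\<lambda>k. \<bar>x $ ii k\<bar>) [0..<n]"
  have d: "distinct (map ii [0..<n])"
    using bii by (simp add: distinct_map bij_betw_def atLeast0LessThan)
  have s: "set (map ii [0..<n]) = UNIV"
    using bii by (simp add: bij_betw_def atLeast0LessThan)
  have "ys = map (\<lambda>i. \<bar>x $ i\<bar>) (map ii [0..<n])" unfolding ys_def by simp
  hence "mset ys = image_mset (\<lambda>i. \<bar>x $ i\<bar>) (mset (map ii [0..<n]))"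
    by (simp only: mset_map)
  also have "mset (map ii [0..<n]) = mset_set UNIV" using mset_set_set[OF d] s by simp
  finally have "mset ys = mset L" unfolding L_def sorted_abs_mset by simp
  then obtain p where p: "p permutes {..<length L}" "permute_list p L = ys"
    using mset_eq_permutation by metis
  have lenL: "length L = n" unfolding L_def n_def by (simp add: sorted_abs_length)
  have key: "L ! (p k) = \<bar>x $ ii k\<bar>" if "k < n" for k
  proof -
    have "permute_list p L ! k = L ! p k" using permute_list_nth[OF p(1)] that lenL by simp
    thus ?thesis using p(2) that unfolding ys_def by simp
  qed
  define \<sigma> where "\<sigma> (j::'n) = p (idx j) + 1" for j
  have "bij_betw p {..<n} {..<n}" using permutes_imp_bij p(1) lenL by metis
  hence b1: "bij_betw (p \<circ> idx) (UNIV::'n set) {..<n}" using bi bij_betw_trans by blast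
  have b2: "bij_betw (\<lambda>k::nat. k + 1) {..<n} {1..n}"
    by (rule bij_betw_byWitness[where f'="\<lambda>k. k - 1"]) auto
  have "bij_betw \<sigma> (UNIV::'n set) {1..n}"
    using bij_betw_trans[OF b1 b2] unfolding \<sigma>_def by (simp add: o_def)
  moreover have "\<bar>x $ j\<bar> = absk x (\<sigma> j)" for j
  proof -
    have "idx j < n" using bi by (auto simp: bij_betw_def)
    hence "absk x (\<sigma> j) = \<bar>x $ ii (idx j)\<bar>" using key unfolding absk_def \<sigma>_def L_def by simp
    also have "ii (idx j) = j" unfolding ii_def using bi by (simp add: bij_betw_def)
    finally show ?thesis by simp
  qed
  ultimately show ?thesis unfolding n_def by blast
qed



lemma norm_zero: "is_norm N \<Longrightarrow> N 0 = 0"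
  unfolding is_norm_def by auto

lemma norm_nonneg: assumes "is_norm N" shows "0 \<le> N w"
proof -
  have h: "\<forall>c x. N (c *\<^sub>R x) = \<bar>c\<bar> * N x" "\<forall>x y. N (x + y) \<le> N x + N y"
    using assms unfolding is_norm_def by auto
  have "N (-w) = N w" using h(1)[rule_format, of "-1" w] by simp
  moreover have "N (w + - w) \<le> N w + N (-w)" using h(2) by blast
  ultimately show ?thesis using norm_zero[OF assms] by simp
qed

lemma norm_scale: "is_norm N \<Longrightarrow> N (c *\<^sub>R w) = \<bar>c\<bar> * N w"
  unfolding is_norm_def by auto

lemma norm_pos: "is_norm N \<Longrightarrow> w \<noteq> 0 \<Longrightarrow> 0 < N w"
  using norm_nonneg[of N w] unfolding is_norm_def by force

lemma norm_abs_eq: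
  "sign_perm_invariant N \<Longrightarrow> (\<And>j. \<bar>w $ j\<bar> = \<bar>z $ j\<bar>) \<Longrightarrow> N w = N z"
  unfolding sign_perm_invariant_def by auto

lemma norm_perm_abs:
  fixes w z :: "real^'n"
  assumes "sign_perm_invariant N" "bij h" "\<And>j. \<bar>w $ h j\<bar> = \<bar>z $ j\<bar>"
  shows "N w = N z"
proof -
  have "h permutes (UNIV::'n set)" using assms(2) by (rule bij_imp_permutes) auto
  hence "N (\<chi> i. w $ h i) = N w" using assms(1) unfolding sign_perm_invariant_def by blast
  moreover have "N (\<chi> i. w $ h i) = N z" using assms(3) by (intro norm_abs_eq[OF assms(1)]) simp
  ultimately show ?thesis by simp
qed

lemma norm_perm_support:
  fixes w z :: "real^'n"
  assumes spi: "sign_perm_invariant N" and inj: "inj_on \<beta> S"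
    and m: "\<And>j. j \<in> S \<Longrightarrow> \<bar>w $ \<beta> j\<bar> = \<bar>z $ j\<bar>"
    and z0: "\<And>j. j \<notin> S \<Longrightarrow> z $ j = 0"
    and w0: "\<And>d. d \<notin> \<beta> ` S \<Longrightarrow> w $ d = 0"
  shows "N w = N z"
proof -
  have cS: "card (\<beta> ` S) = card S" using inj by (simp add: card_image)
  have "card (- S) = card (- (\<beta> ` S))"
    using cS by (simp add: Compl_eq_Diff_UNIV card_Diff_subset)
  then obtain \<gamma> where g: "bij_betw \<gamma> (- S) (- (\<beta> ` S))"
    using finite_same_card_bij[OF finite finite] by metis
  define h where "h j = (if j \<in> S then \<beta> j else \<gamma> j)" for j
  have b1: "bij_betw h S (\<beta> ` S)" using inj unfolding bij_betw_def inj_on_def h_def by (auto simp: image_iff)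
  have b2: "bij_betw h (- S) (- (\<beta> ` S))"
    using g unfolding bij_betw_def inj_on_def h_def by auto
  have "bij_betw h (S \<union> - S) (\<beta> ` S \<union> - (\<beta> ` S))"
    by (rule bij_betw_combine[OF b1 b2]) auto
  hence "bij h" by simp
  moreover have "\<bar>w $ h j\<bar> = \<bar>z $ j\<bar>" for j
  proof (cases "j \<in> S")
    case True thus ?thesis using m by (simp add: h_def)
  next
    case False
    hence "h j \<in> - (\<beta> ` S)" using g unfolding h_def bij_betw_def by auto
    thus ?thesis using False z0 w0 by auto
  qed
  ultimately show ?thesis by (rule norm_perm_abs[OF spi])
qed

lemma inner_perm:
  fixes w v :: "real^'n"
  assumes "bij h"
  shows "w \<bullet> (\<chi> j. v $ h j) = (\<chi> j. w $ inv h j) \<bullet> v"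
proof -
  have "w \<bullet> (\<chi> j. v $ h j) = (\<Sum>j\<in>UNIV. w $ j * v $ h j)" by (simp add: inner_vec_def)
  also have "\<dots> = (\<Sum>j\<in>UNIV. w $ inv h (h j) * v $ h j)" using assms by (simp add: bij_is_inj)
  also have "\<dots> = (\<Sum>k\<in>UNIV. w $ inv h k * v $ k)"
    using assms by (rule sum.reindex_bij_betw)
  also have "\<dots> = (\<chi> j. w $ inv h j) \<bullet> v" by (simp add: inner_vec_def)
  finally show ?thesis .
qed



locale thm6 =
  fixes N :: "real^'n \<Rightarrow> real" and K :: nat and x :: "real^'n" and \<sigma> :: "'n \<Rightarrow> nat"
  assumes K1: "1 < K" and Kn: "K < CARD('n)" and nN: "is_norm N" and spi: "sign_perm_invariant N"
    and sb: "bij_betw \<sigma> UNIV {1..CARD('n)}" and sx: "\<And>j. \<bar>x $ j\<bar> = absk x (\<sigma> j)"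
begin

definition "ix = i_x K x"
definition "dl = delta K x"
definition "m = K - ix + 1"
definition "T i = (\<Sum>j=i..CARD('n). absk x j)"
definition "A0 = {j. \<sigma> j < ix}"
definition "Bk = {j. ix \<le> \<sigma> j \<and> \<sigma> j \<le> K}"
definition "H = {j. ix \<le> \<sigma> j}"
definition "R = {j. K < \<sigma> j}"
definition "ux = (\<chi> j. u_fun K x (\<sigma> j))"

lemma sig_range: "1 \<le> \<sigma> j" "\<sigma> j \<le> CARD('n)"
  using sb by (auto simp: bij_betw_def)

lemma a_dec: "1 \<le> i \<Longrightarrow> i \<le> j \<Longrightarrow> j \<le> CARD('n) \<Longrightarrow> absk x j \<le> absk x i"
  unfolding absk_def by (rule sorted_abs_dec) auto

lemma a_nonneg: "1 \<le> i \<Longrightarrow> i \<le> CARD('n) \<Longrightarrow> 0 \<le> absk x i"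
  unfolding absk_def by (rule sorted_abs_nonneg) auto

lemma s_eq: "s_fun K x i = T i / real (K - i + 1)"
  unfolding s_fun_def T_def by simp

lemma ix_props: "ix \<in> {1..K}" "\<And>j. j \<in> {1..K} \<Longrightarrow> s_fun K x ix \<le> s_fun K x j"
  "\<And>i. i \<in> {1..K} \<Longrightarrow> i < ix \<Longrightarrow> \<exists>j\<in>{1..K}. s_fun K x j < s_fun K x i"
proof -
  let ?P = "\<lambda>i. i \<in> {1..K} \<and> (\<forall>j\<in>{1..K}. s_fun K x i \<le> s_fun K x j)"
  have ne: "s_fun K x ` {1..K} \<noteq> {}" using K1 by auto
  obtain i0 where i0: "i0 \<in> {1..K}" "s_fun K x i0 = Min (s_fun K x ` {1..K})"
    using Min_in[OF _ ne] by auto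
  have "?P i0" using i0 by auto
  hence P: "?P ix" unfolding ix_def i_x_def by (rule LeastI)
  thus "ix \<in> {1..K}" "\<And>j. j \<in> {1..K} \<Longrightarrow> s_fun K x ix \<le> s_fun K x j" by auto
  fix i assume "i \<in> {1..K}" "i < ix"
  hence "\<not> ?P i" unfolding ix_def i_x_def using not_less_Least by blast
  thus "\<exists>j\<in>{1..K}. s_fun K x j < s_fun K x i" using \<open>i \<in> {1..K}\<close> by force
qed

lemma ix1: "1 \<le> ix" and ixK: "ix \<le> K" using ix_props(1) by auto

lemma ix_least: "1 \<le> i \<Longrightarrow> i < ix \<Longrightarrow> dl < s_fun K x i"
proof -
  assume "1 \<le> i" "i < ix"
  then obtain j where "j \<in> {1..K}" "s_fun K x j < s_fun K x i" using ix_props(3) ixK by force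
  moreover have "dl \<le> s_fun K x j" unfolding dl_def delta_def ix_def[symmetric] using ix_props(2) calculation(1) by blast
  ultimately show ?thesis by simp
qed

lemma ix_min: "j \<in> {1..K} \<Longrightarrow> dl \<le> s_fun K x j"
  unfolding dl_def delta_def ix_def[symmetric] using ix_props(2) by blast

lemma T_split: "i \<le> CARD('n) \<Longrightarrow> T i = absk x i + T (Suc i)"
  unfolding T_def by (rule sum.atLeast_Suc_atMost)

lemma T_nonneg: "1 \<le> i \<Longrightarrow> 0 \<le> T i"
  unfolding T_def by (intro sum_nonneg a_nonneg) auto

lemma m_pos: "1 \<le> m" and m_eq: "real m = real (K - ix + 1)" unfolding m_def by auto

lemma T_ix: "T ix = real m * dl"
proof -
  have "dl = T ix / real m" unfolding dl_def delta_def ix_def[symmetric] s_eq m_def by simp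
  thus ?thesis using m_pos by simp
qed

lemma dl_nonneg: "0 \<le> dl"
proof -
  have "0 \<le> T ix" using T_nonneg ix1 by blast
  thus ?thesis using T_ix m_pos by (simp add: zero_le_mult_iff)
qed

lemma top_gt: "1 \<le> r \<Longrightarrow> r < ix \<Longrightarrow> dl < absk x r"
proof -
  assume r: "1 \<le> r" "r < ix"
  define i where "i = ix - 1"
  have i: "1 \<le> i" "Suc i = ix" "r \<le> i" "i \<le> CARD('n)" using r ixK Kn unfolding i_def by auto
  have "dl < s_fun K x i" using ix_least i by auto
  also have "K - i + 1 = m + 1" unfolding m_def using i ixK by simp
  hence "s_fun K x i = T i / real (m + 1)" unfolding s_eq by (simp only:)
  also have "T i = absk x i + real m * dl" using T_split[OF i(4)] i T_ix by simp
  finally have "dl * real (m+1) < absk x i + real m * dl"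
    by (simp add: pos_less_divide_eq del: of_nat_Suc)
  hence "dl < absk x i" by (simp add: algebra_simps)
  also have "absk x i \<le> absk x r" using a_dec i r by auto
  finally show ?thesis .
qed

lemma tail_le: "ix \<le> r \<Longrightarrow> r \<le> CARD('n) \<Longrightarrow> absk x r \<le> dl"
proof -
  assume r: "ix \<le> r" "r \<le> CARD('n)"
  have "absk x ix \<le> dl"
  proof (cases "ix < K")
    case True
    have mm: "m = Suc (K - Suc ix + 1)" using True unfolding m_def by simp
    have "dl \<le> s_fun K x (Suc ix)" using ix_min True ix1 by auto
    also have "s_fun K x (Suc ix) = T (Suc ix) / real (m - 1)" unfolding s_eq mm by simp
    finally have "dl * real (m - 1) \<le> T (Suc ix)" using True mm by (simp add: le_divide_eq)
    moreover have "T ix = absk x ix + T (Suc ix)" using T_split ixK Kn by simp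
    ultimately have "dl * real (m - 1) + absk x ix \<le> real m * dl" using T_ix by simp
    moreover have "real (m - 1) = real m - 1" using m_pos by simp
    ultimately show ?thesis by (simp add: algebra_simps)
  next
    case False
    hence "ix = K" using ixK by simp
    hence "m = 1" unfolding m_def by simp
    hence "T ix = dl" using T_ix by simp
    moreover have "T ix = absk x ix + T (Suc ix)" using T_split ixK Kn by simp
    moreover have "0 \<le> T (Suc ix)" using T_nonneg by simp
    ultimately show ?thesis by simp
  qed
  also have "absk x r \<le> absk x ix" using a_dec ix1 r by auto
  finally show ?thesis by simp
qed

lemma ux_val: "ux $ j = (if j \<in> A0 then \<bar>x $ j\<bar> else if j \<in> Bk then dl else 0)"
  unfolding ux_def u_fun_def A0_def Bk_def ix_def[symmetric] dl_def[symmetric] using sx[of j] by auto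

lemma bij_sig: "bij_betw \<sigma> {j. P (\<sigma> j)} {r\<in>{1..CARD('n)}. P r}"
proof -
  have i: "inj \<sigma>" using sb by (simp add: bij_betw_def)
  have r: "range \<sigma> = {1..CARD('n)}" using sb by (simp add: bij_betw_def)
  have "\<sigma> ` {j. P (\<sigma> j)} = {r\<in>{1..CARD('n)}. P r}"
  proof
    show "\<sigma> ` {j. P (\<sigma> j)} \<subseteq> {r\<in>{1..CARD('n)}. P r}" using r by auto
    show "{r\<in>{1..CARD('n)}. P r} \<subseteq> \<sigma> ` {j. P (\<sigma> j)}"
    proof
      fix r assume "r \<in> {r\<in>{1..CARD('n)}. P r}"
      then obtain j where "r = \<sigma> j" "P r" using r by (metis (mono_tags, lifting) imageE mem_Collect_eq)
      thus "r \<in> \<sigma> ` {j. P (\<sigma> j)}" by auto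
    qed
  qed
  thus ?thesis using i unfolding bij_betw_def inj_on_def by auto
qed

lemma card_sig: "card {j. P (\<sigma> j)} = card {r\<in>{1..CARD('n)}. P r}"
  using bij_sig by (rule bij_betw_same_card)

lemma card_A0: "card A0 = ix - 1"
proof -
  have "{r\<in>{1..CARD('n)}. r < ix} = {1..<ix}" using ixK Kn by auto
  thus ?thesis unfolding A0_def using card_sig[of "\<lambda>r. r < ix"] by simp
qed

lemma card_Bk: "card Bk = m"
proof -
  have "{r\<in>{1..CARD('n)}. ix \<le> r \<and> r \<le> K} = {ix..K}" using ix1 Kn by auto
  thus ?thesis unfolding Bk_def m_def using card_sig[of "\<lambda>r. ix \<le> r \<and> r \<le> K"] ixK by simp
qed

lemma card_H: "card H = CARD('n) + 1 - ix"
proof -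
  have "{r\<in>{1..CARD('n)}. ix \<le> r} = {ix..CARD('n)}" using ix1 by auto
  thus ?thesis unfolding H_def using card_sig[of "\<lambda>r. ix \<le> r"] by simp
qed

lemma card_R: "card R = CARD('n) - K"
proof -
  have "{r\<in>{1..CARD('n)}. K < r} = {Suc K..CARD('n)}" using K1 by auto
  thus ?thesis unfolding R_def using card_sig[of "\<lambda>r. K < r"] by simp
qed

lemma sum_H: "(\<Sum>j\<in>H. \<bar>x $ j\<bar>) = real m * dl"
proof -
  have e: "{r\<in>{1..CARD('n)}. ix \<le> r} = {ix..CARD('n)}" using ix1 by auto
  have "bij_betw \<sigma> H {ix..CARD('n)}" using bij_sig[of "\<lambda>r. ix \<le> r"] unfolding H_def e .
  hence "(\<Sum>j\<in>H. absk x (\<sigma> j)) = (\<Sum>r\<in>{ix..CARD('n)}. absk x r)" by (rule sum.reindex_bij_betw)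
  thus ?thesis using T_ix sx unfolding T_def by simp
qed

lemma A0_gt: "j \<in> A0 \<Longrightarrow> dl < \<bar>x $ j\<bar>"
  unfolding A0_def using top_gt sig_range sx by auto

lemma H_le: "j \<in> H \<Longrightarrow> \<bar>x $ j\<bar> \<le> dl"
  unfolding H_def using tail_le sig_range sx by auto

lemma sets_basic: "A0 \<inter> H = {}" "A0 \<union> H = UNIV" "Bk \<subseteq> H" "R \<subseteq> H" "Bk \<inter> R = {}"
  "Bk \<union> R = H" "A0 \<inter> Bk = {}"
  unfolding A0_def H_def Bk_def R_def using ix1 ixK by auto

end



context thm6
begin

definition "P = {t::real^'n. (\<forall>j\<in>A0. t $ j = \<bar>x $ j\<bar>) \<and> (\<forall>j\<in>H. 0 \<le> t $ j \<and> t $ j \<le> dl)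
   \<and> (\<Sum>j\<in>H. t $ j) = real m * dl}"

lemma absx_P: "(\<chi> j. \<bar>x $ j\<bar>) \<in> P"
  unfolding P_def using H_le sum_H by auto

lemma convex_P: "convex P"
proof (rule convexI)
  fix t1 t2 and u v :: real assume t: "t1 \<in> P" "t2 \<in> P" and uv0: "0 \<le> u" "0 \<le> v" "u + v = 1"
  hence uv: "0 \<le> u \<and> 0 \<le> v \<and> u + v = 1" by simp
  have A: "\<forall>j\<in>A0. (u *\<^sub>R t1 + v *\<^sub>R t2) $ j = \<bar>x $ j\<bar>"
  proof
    fix j assume "j \<in> A0"
    hence "(u *\<^sub>R t1 + v *\<^sub>R t2) $ j = (u + v) * \<bar>x $ j\<bar>" using t unfolding P_def by (simp add: algebra_simps)
    thus "(u *\<^sub>R t1 + v *\<^sub>R t2) $ j = \<bar>x $ j\<bar>" using uv by simp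
  qed
  have B: "\<forall>j\<in>H. 0 \<le> (u *\<^sub>R t1 + v *\<^sub>R t2) $ j \<and> (u *\<^sub>R t1 + v *\<^sub>R t2) $ j \<le> dl"
  proof
    fix j assume "j \<in> H"
    hence h: "0 \<le> t1 $ j" "t1 $ j \<le> dl" "0 \<le> t2 $ j" "t2 $ j \<le> dl" using t unfolding P_def by auto
    have "u * t1 $ j \<le> u * dl" "v * t2 $ j \<le> v * dl" using h uv by (auto intro: mult_left_mono)
    hence "u * t1 $ j + v * t2 $ j \<le> (u + v) * dl" by (simp add: algebra_simps)
    thus "0 \<le> (u *\<^sub>R t1 + v *\<^sub>R t2) $ j \<and> (u *\<^sub>R t1 + v *\<^sub>R t2) $ j \<le> dl"
      using h uv by simp
  qed
  have "(\<Sum>j\<in>H. (u *\<^sub>R t1 + v *\<^sub>R t2) $ j) = u * (\<Sum>j\<in>H. t1 $ j) + v * (\<Sum>j\<in>H. t2 $ j)"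
    by (simp add: sum.distrib sum_distrib_left)
  also have "\<dots> = (u + v) * (real m * dl)" using t unfolding P_def by (simp add: algebra_simps)
  finally have C: "(\<Sum>j\<in>H. (u *\<^sub>R t1 + v *\<^sub>R t2) $ j) = real m * dl" using uv by simp
  show "u *\<^sub>R t1 + v *\<^sub>R t2 \<in> P" using A B C unfolding P_def by blast
qed

lemma closed_P: "closed P"
proof -
  have o: "open {t::real^'n. Q}" for Q by (cases Q) auto
  show ?thesis unfolding P_def Ball_def
    by (intro closed_Collect_conj closed_Collect_all closed_Collect_imp closed_Collect_eq
        closed_Collect_le o continuous_intros)
qed

lemma bounded_P: "bounded P"
  unfolding bounded_iff
proof (intro exI ballI)
  fix t assume t: "t \<in> P"
  have "\<bar>t $ j\<bar> \<le> \<bar>x $ j\<bar> + dl" for j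
  proof (cases "j \<in> A0")
    case True thus ?thesis using t dl_nonneg unfolding P_def by auto
  next
    case False hence "j \<in> H" using sets_basic by auto
    thus ?thesis using t unfolding P_def by auto
  qed
  hence "(\<Sum>j\<in>UNIV. \<bar>t $ j\<bar>) \<le> (\<Sum>j\<in>UNIV. \<bar>x $ j\<bar> + dl)" by (intro sum_mono)
  thus "norm t \<le> (\<Sum>j\<in>UNIV. \<bar>x $ j\<bar> + dl)" using norm_le_l1_cart[of t] by linarith
qed

lemma compact_P: "compact P"
  using bounded_P closed_P by (simp add: compact_eq_bounded_closed)

definition "dvec j j' = (\<chi> k. (if k = j then 1 else 0) - (if k = j' then 1 else (0::real)))"

lemma perturb_P:
  assumes e: "e \<in> P" and j: "j \<in> H" "j' \<in> H" "j \<noteq> j'"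
    and b: "0 \<le> e $ j + s" "e $ j + s \<le> dl" "0 \<le> e $ j' - s" "e $ j' - s \<le> dl"
  shows "e + s *\<^sub>R dvec j j' \<in> P"
proof -
  have jA: "j \<notin> A0" "j' \<notin> A0" using j sets_basic by auto
  have c: "(e + s *\<^sub>R dvec j j') $ k = e $ k + (if k = j then s else 0) - (if k = j' then s else 0)" for k
    unfolding dvec_def by auto
  have A: "\<forall>k\<in>A0. (e + s *\<^sub>R dvec j j') $ k = \<bar>x $ k\<bar>" using e jA unfolding c P_def by auto
  have B: "\<forall>k\<in>H. 0 \<le> (e + s *\<^sub>R dvec j j') $ k \<and> (e + s *\<^sub>R dvec j j') $ k \<le> dl"
    using e b j unfolding c P_def by auto
  have "(\<Sum>k\<in>H. (e + s *\<^sub>R dvec j j') $ k) =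
      (\<Sum>k\<in>H. e $ k) + (\<Sum>k\<in>H. (if k = j then s else 0)) - (\<Sum>k\<in>H. (if k = j' then s else 0))"
    unfolding c by (simp add: sum.distrib sum_subtractf)
  also have "\<dots> = (\<Sum>k\<in>H. e $ k)" using j by simp
  finally have C: "(\<Sum>k\<in>H. (e + s *\<^sub>R dvec j j') $ k) = real m * dl" using e unfolding P_def by simp
  show ?thesis using A B C unfolding P_def by blast
qed

lemma ext_vals:
  assumes ext: "e extreme_point_of P" and j: "j \<in> H"
  shows "e $ j = 0 \<or> e $ j = dl"
proof (rule ccontr)
  assume ne: "\<not> (e $ j = 0 \<or> e $ j = dl)"
  have eP: "e \<in> P" using ext unfolding extreme_point_of_def by auto
  have ej: "0 < e $ j" "e $ j < dl" using eP j ne unfolding P_def by force+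
  have "\<exists>j'\<in>H. j' \<noteq> j \<and> 0 < e $ j' \<and> e $ j' < dl"
  proof (rule ccontr)
    assume "\<not> ?thesis"
    hence vals: "\<forall>j'\<in>H - {j}. e $ j' = 0 \<or> e $ j' = dl" using eP unfolding P_def by force
    define M where "M = {j'\<in>H - {j}. e $ j' = dl}"
    have "(\<Sum>k\<in>H - {j}. e $ k) = (\<Sum>k\<in>H - {j}. if k \<in> M then dl else 0)"
      using vals unfolding M_def by (intro sum.cong) auto
    also have "\<dots> = real (card M) * dl" unfolding M_def
      by (simp add: sum.If_cases Int_absorb1 Int_def)
    finally have s1: "(\<Sum>k\<in>H - {j}. e $ k) = real (card M) * dl" .
    have "(\<Sum>k\<in>H. e $ k) = e $ j + (\<Sum>k\<in>H - {j}. e $ k)" using j by (simp add: sum.remove)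
    hence "e $ j = real m * dl - real (card M) * dl" using s1 eP unfolding P_def by simp
    hence ejk: "e $ j = real_of_int (int m - int (card M)) * dl" by (simp add: algebra_simps)
    define k where "k = int m - int (card M)"
    have dpos: "0 < dl" using ej by simp
    have "0 < real_of_int k" using ej ejk dpos unfolding k_def by (simp add: zero_less_mult_iff)
    moreover have "real_of_int k < 1" using ej ejk dpos unfolding k_def by simp
    ultimately have "0 < k" "k < 1" by simp_all
    thus False by simp
  qed
  then obtain j' where j': "j' \<in> H" "j' \<noteq> j" "0 < e $ j'" "e $ j' < dl" by blast
  define \<epsilon> where "\<epsilon> = min (min (e $ j) (dl - e $ j)) (min (e $ j') (dl - e $ j'))"
  have epos: "0 < \<epsilon>" using ej j' unfolding \<epsilon>_def by simp
  have e1: "e + \<epsilon> *\<^sub>R dvec j j' \<in> P"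
    by (rule perturb_P[OF eP j j'(1) j'(2)[symmetric]]) (use ej j' in \<open>auto simp: \<epsilon>_def\<close>)
  have e2: "e + (- \<epsilon>) *\<^sub>R dvec j j' \<in> P"
    by (rule perturb_P[OF eP j j'(1) j'(2)[symmetric]]) (use ej j' in \<open>auto simp: \<epsilon>_def\<close>)
  have mid: "midpoint (e + \<epsilon> *\<^sub>R dvec j j') (e + (- \<epsilon>) *\<^sub>R dvec j j') = e"
    by (simp add: midpoint_def vec_eq_iff)
  have "(e + \<epsilon> *\<^sub>R dvec j j') $ j \<noteq> (e + (- \<epsilon>) *\<^sub>R dvec j j') $ j"
    using epos j'(2) unfolding dvec_def by auto
  hence "e + \<epsilon> *\<^sub>R dvec j j' \<noteq> e + (- \<epsilon>) *\<^sub>R dvec j j'" by metis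
  hence "e \<in> open_segment (e + \<epsilon> *\<^sub>R dvec j j') (e + (- \<epsilon>) *\<^sub>R dvec j j')"
    using midpoint_in_open_segment mid by metis
  thus False using ext e1 e2 unfolding extreme_point_of_def by blast
qed

end



context thm6
begin

lemma cardA0m: "card A0 + m = K" using card_A0 ix1 ixK unfolding m_def by simp

lemma ext_good:
  assumes ext: "e extreme_point_of P"
  shows "N e = N ux \<and> vcard e \<le> K"
proof -
  have eP: "e \<in> P" using ext unfolding extreme_point_of_def by auto
  have eA: "\<And>j. j \<in> A0 \<Longrightarrow> e $ j = \<bar>x $ j\<bar>" using eP unfolding P_def by auto
  have eH: "\<And>j. j \<in> H \<Longrightarrow> e $ j = 0 \<or> e $ j = dl" using ext_vals[OF ext] by auto
  have AH: "\<And>j. j \<notin> A0 \<Longrightarrow> j \<in> H" using sets_basic by auto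
  show ?thesis
  proof (cases "dl = 0")
    case True
    have "\<bar>e $ j\<bar> = \<bar>ux $ j\<bar>" for j
      using eA[of j] eH[of j] AH[of j] True unfolding ux_val by auto
    hence "N e = N ux" by (rule norm_abs_eq[OF spi])
    moreover have "{j. e $ j \<noteq> 0} \<subseteq> A0" using eH AH True by auto
    hence "vcard e \<le> card A0" unfolding vcard_def by (intro card_mono) auto
    ultimately show ?thesis using cardA0m by simp
  next
    case False
    hence dpos: "0 < dl" using dl_nonneg by simp
    define M where "M = {j\<in>H. e $ j = dl}"
    have MH: "M \<subseteq> H" unfolding M_def by auto
    have "(\<Sum>j\<in>H. e $ j) = (\<Sum>j\<in>H. if j \<in> M then dl else 0)"
      using eH unfolding M_def by (intro sum.cong) auto
    also have "\<dots> = real (card M) * dl" using MH by (simp add: sum.If_cases Int_absorb1)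
    finally have "real (card M) * dl = real m * dl" using eP unfolding P_def by simp
    hence cM: "card M = card Bk" using dpos card_Bk by simp
    obtain f where f: "bij_betw f M Bk" using finite_same_card_bij[OF finite finite cM] by metis
    define \<beta> where "\<beta> j = (if j \<in> A0 then j else f j)" for j
    have fB: "\<And>j. j \<in> M \<Longrightarrow> f j \<in> Bk" using f by (auto simp: bij_betw_def)
    have MA: "\<And>j. j \<in> M \<Longrightarrow> j \<notin> A0" using MH sets_basic by auto
    have BA: "\<And>j. j \<in> Bk \<Longrightarrow> j \<notin> A0" using sets_basic by auto
    have inj: "inj_on \<beta> (A0 \<union> M)"
    proof (rule inj_onI)
      fix a b assume ab: "a \<in> A0 \<union> M" "b \<in> A0 \<union> M" "\<beta> a = \<beta> b"
      show "a = b"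
      proof (cases "a \<in> A0")
        case True
        show ?thesis
        proof (cases "b \<in> A0")
          case True thus ?thesis using ab \<open>a \<in> A0\<close> by (simp add: \<beta>_def)
        next
          case False
          hence "b \<in> M" using ab by auto
          hence "\<beta> b \<in> Bk" using fB False by (simp add: \<beta>_def)
          moreover have "\<beta> a \<in> A0" using \<open>a \<in> A0\<close> by (simp add: \<beta>_def)
          ultimately show ?thesis using ab(3) BA by metis
        qed
      next
        case aF: False
        hence aM: "a \<in> M" using ab by auto
        show ?thesis
        proof (cases "b \<in> A0")
          case True
          hence "\<beta> b \<in> A0" by (simp add: \<beta>_def)
          moreover have "\<beta> a \<in> Bk" using fB aF aM by (simp add: \<beta>_def)
          ultimately show ?thesis using ab(3) BA by metis
        next
          case False
          hence "b \<in> M" using ab by auto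
          moreover have "f a = f b" using ab(3) False aF by (simp add: \<beta>_def)
          ultimately show ?thesis using aM f unfolding bij_betw_def inj_on_def by blast
        qed
      qed
    qed
    have img: "\<beta> ` (A0 \<union> M) = A0 \<union> Bk"
    proof -
      have "\<beta> ` (A0 \<union> M) = A0 \<union> f ` M" unfolding \<beta>_def using MA by (auto simp: image_iff)
      thus ?thesis using f by (simp add: bij_betw_def)
    qed
    have "N ux = N e"
    proof (rule norm_perm_support[OF spi inj])
      fix j assume j: "j \<in> A0 \<union> M"
      show "\<bar>ux $ \<beta> j\<bar> = \<bar>e $ j\<bar>"
      proof (cases "j \<in> A0")
        case True thus ?thesis using eA[OF True] by (simp add: \<beta>_def ux_val)
      next
        case False
        hence jM: "j \<in> M" using j by auto
        hence "\<beta> j \<in> Bk" "\<beta> j \<notin> A0" using fB BA False by (auto simp: \<beta>_def)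
        hence "ux $ \<beta> j = dl" by (simp add: ux_val)
        moreover have "e $ j = dl" using jM by (simp add: M_def)
        ultimately show ?thesis by simp
      qed
    next
      fix j assume j: "j \<notin> A0 \<union> M"
      hence "j \<in> H" "e $ j \<noteq> dl" using AH by (auto simp: M_def)
      thus "e $ j = 0" using eH by blast
    next
      fix d assume "d \<notin> \<beta> ` (A0 \<union> M)"
      thus "ux $ d = 0" unfolding img ux_val by auto
    qed
    moreover have "{j. e $ j \<noteq> 0} \<subseteq> A0 \<union> M" using eH AH unfolding M_def by auto
    hence "vcard e \<le> card (A0 \<union> M)" unfolding vcard_def by (intro card_mono) auto
    hence "vcard e \<le> card A0 + card M" using card_Un_le[of A0 M] by linarith
    ultimately show ?thesis using cardA0m cM card_Bk by simp
  qed
qed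

definition "sg j = (if x $ j < 0 then -1 else (1::real))"
definition "Lm t = (\<chi> j. sg j * t $ j)"

lemma linear_Lm: "linear Lm"
  by (rule linearI) (simp_all add: Lm_def vec_eq_iff algebra_simps)

lemma Lm_abs: "Lm (\<chi> j. \<bar>x $ j\<bar>) = x"
  unfolding Lm_def sg_def by (simp add: vec_eq_iff)

lemma sg_abs: "\<bar>sg j\<bar> = 1" "sg j \<noteq> 0" unfolding sg_def by auto

lemma Lm_norm: "N (Lm e) = N e"
  by (rule norm_abs_eq[OF spi]) (simp add: Lm_def abs_mult sg_abs)

lemma Lm_vcard: "vcard (Lm e) = vcard e"
  unfolding vcard_def Lm_def by (simp add: sg_abs)

lemma upper: "x \<in> convex hull {y. N y = N ux \<and> vcard y \<le> K}"
proof -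
  have "(\<chi> j. \<bar>x $ j\<bar>) \<in> convex hull {e. e extreme_point_of P}"
    using absx_P Krein_Milman_Minkowski[OF compact_P convex_P] by auto
  hence "x \<in> Lm ` (convex hull {e. e extreme_point_of P})" using Lm_abs by (metis imageI)
  also have "\<dots> = convex hull (Lm ` {e. e extreme_point_of P})"
    by (rule convex_hull_linear_image[OF linear_Lm])
  also have "\<dots> \<subseteq> convex hull {y. N y = N ux \<and> vcard y \<le> K}"
    by (rule hull_mono) (use ext_good Lm_norm Lm_vcard in auto)
  finally show ?thesis .
qed

end



lemma norm_triangle': "is_norm N \<Longrightarrow> N (a + b) \<le> N a + N b"
  unfolding is_norm_def by blast

lemma support_functional:
  fixes N :: "real^'n \<Rightarrow> real"
  assumes nN: "is_norm N" and pp: "0 < N p"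
  shows "\<exists>v. p \<bullet> v = N p \<and> (\<forall>w. w \<bullet> v \<le> N w)"
proof -
  define S where "S = {w::real^'n. N w \<le> 1}"
  have cS: "convex S" unfolding S_def
  proof (rule convexI)
    fix a b :: "real^'n" and u v :: real
    assume ab: "a \<in> {w. N w \<le> 1}" "b \<in> {w. N w \<le> 1}" and uv: "0 \<le> u" "0 \<le> v" "u + v = 1"
    have "N (u *\<^sub>R a + v *\<^sub>R b) \<le> N (u *\<^sub>R a) + N (v *\<^sub>R b)" by (rule norm_triangle'[OF nN])
    also have "\<dots> = u * N a + v * N b" using uv norm_scale[OF nN] by simp
    also have "\<dots> \<le> u * 1 + v * 1" using ab uv by (intro add_mono mult_left_mono) auto
    finally show "u *\<^sub>R a + v *\<^sub>R b \<in> {w. N w \<le> 1}" using uv by simp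
  qed
  define q where "q = (1 / N p) *\<^sub>R p"
  have Nq: "N q = 1" unfolding q_def using norm_scale[OF nN] pp by simp
  have qS: "q \<in> S" using Nq unfolding S_def by simp
  have "q \<notin> rel_interior S"
  proof
    assume "q \<in> rel_interior S"
    then obtain e where e: "e > 0" "ball q e \<inter> affine hull S \<subseteq> S"
      unfolding mem_rel_interior_ball by auto
    define t where "t = e / (2 * (norm q + 1))"
    have tpos: "0 < t" unfolding t_def using e(1) norm_ge_zero[of q] by (smt (verit) divide_pos_pos)
    define r where "r = (1 + t) *\<^sub>R q"
    have "dist q r = t * norm q" unfolding r_def dist_norm
      by (simp add: algebra_simps tpos less_imp_le)
    also have "t * norm q < e"
    proof -
      have d: "0 < 2 * (norm q + 1)" using norm_ge_zero[of q] by (smt (verit))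
      have "norm q < 2 * (norm q + 1)" using norm_ge_zero[of q] by (smt (verit))
      hence "norm q / (2 * (norm q + 1)) < 1" using d by (simp add: divide_less_eq)
      hence "e * (norm q / (2 * (norm q + 1))) < e * 1" using e(1) by (intro mult_strict_left_mono)
      thus ?thesis unfolding t_def by (simp add: field_simps)
    qed
    finally have "r \<in> ball q e" by (simp add: dist_commute)
    moreover have "r \<in> affine hull S"
    proof -
      have "0 \<in> S" unfolding S_def using norm_zero[OF nN] by simp
      hence "(1 + t) *\<^sub>R q + (- t) *\<^sub>R 0 \<in> affine hull S"
        by (intro mem_affine[OF affine_affine_hull] hull_inc qS) auto
      thus ?thesis unfolding r_def by simp
    qed
    ultimately have "r \<in> S" using e by auto
    moreover have "N r = 1 + t" unfolding r_def using norm_scale[OF nN] Nq tpos by simp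
    ultimately show False using tpos unfolding S_def by simp
  qed
  then obtain a where a: "a \<noteq> 0" "\<And>y. y \<in> closure S \<Longrightarrow> a \<bullet> q \<le> a \<bullet> y"
    using supporting_hyperplane_relative_frontier[OF cS closure_subset[THEN subsetD, OF qS]] by metis
  define b where "b = - a"
  have bS: "\<And>y. y \<in> S \<Longrightarrow> b \<bullet> y \<le> b \<bullet> q" using a(2) closure_subset unfolding b_def by force
  have bq: "0 < b \<bullet> q"
  proof -
    have "b \<noteq> 0" using a unfolding b_def by simp
    hence Nb: "0 < N b" by (rule norm_pos[OF nN])
    define y0 where "y0 = (1 / N b) *\<^sub>R b"
    have "N y0 = 1" unfolding y0_def using norm_scale[OF nN] Nb by simp
    hence "b \<bullet> y0 \<le> b \<bullet> q" using bS unfolding S_def by simp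
    moreover have "b \<bullet> y0 = (b \<bullet> b) / N b" unfolding y0_def by simp
    moreover have "0 < b \<bullet> b" using \<open>b \<noteq> 0\<close> by simp
    ultimately show ?thesis using Nb by (smt (verit) divide_pos_pos)
  qed
  have bw: "b \<bullet> w \<le> N w * (b \<bullet> q)" for w
  proof (cases "w = 0")
    case True thus ?thesis using norm_zero[OF nN] by simp
  next
    case False
    hence Nw: "0 < N w" by (rule norm_pos[OF nN])
    have "N ((1 / N w) *\<^sub>R w) = 1" using norm_scale[OF nN] Nw by simp
    hence "b \<bullet> ((1 / N w) *\<^sub>R w) \<le> b \<bullet> q" using bS[of "(1 / N w) *\<^sub>R w"] unfolding S_def by simp
    hence "(b \<bullet> w) / N w \<le> b \<bullet> q" by (simp only: inner_scaleR_right) simp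
    thus ?thesis using Nw by (simp add: divide_le_eq mult.commute)
  qed
  define v where "v = (1 / (b \<bullet> q)) *\<^sub>R b"
  have "w \<bullet> v \<le> N w" for w
  proof -
    have "w \<bullet> v = (b \<bullet> w) / (b \<bullet> q)" unfolding v_def by (simp add: inner_commute)
    also have "\<dots> \<le> N w" using bw[of w] bq by (simp add: divide_le_eq)
    finally show ?thesis .
  qed
  moreover have "p \<bullet> v = N p"
  proof -
    have "p = N p *\<^sub>R q" unfolding q_def using pp by simp
    hence "p \<bullet> v = N p * (q \<bullet> b) / (b \<bullet> q)" unfolding v_def by (metis inner_scaleR_left inner_scaleR_right mult.commute times_divide_eq_right mult_1 divide_inverse_commute inverse_eq_divide)
    thus ?thesis using bq by (simp add: inner_commute)
  qed
  ultimately show ?thesis by blast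
qed



context thm6
begin

definition "dual v \<longleftrightarrow> (\<forall>w. w \<bullet> v \<le> N w)"

lemma ux_nonneg: "0 \<le> ux $ j"
  unfolding ux_val using dl_nonneg by auto

lemma dual_perm:
  assumes d: "dual v" and h: "bij h"
  shows "dual (\<chi> j. v $ h j)"
  unfolding dual_def
proof
  fix w
  have "w \<bullet> (\<chi> j. v $ h j) = (\<chi> j. w $ inv h j) \<bullet> v" by (rule inner_perm[OF h])
  also have "\<dots> \<le> N (\<chi> j. w $ inv h j)" using d unfolding dual_def by blast
  also have "N (\<chi> j. w $ inv h j) = N w"
  proof -
    have "inv h permutes (UNIV::'n set)" using bij_imp_bij_inv[OF h] by (rule bij_imp_permutes) auto
    thus ?thesis using spi unfolding sign_perm_invariant_def by blast
  qed
  finally show "w \<bullet> (\<chi> j. v $ h j) \<le> N w" .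
qed

lemma dual_abs:
  assumes d: "dual v"
  shows "dual (\<chi> j. \<bar>v $ j\<bar>)"
  unfolding dual_def
proof
  fix w
  define w' where "w' = (\<chi> j. w $ j * (if v $ j < 0 then -1 else (1::real)))"
  have "w \<bullet> (\<chi> j. \<bar>v $ j\<bar>) = w' \<bullet> v"
    unfolding inner_vec_def w'_def by (intro sum.cong) auto
  also have "\<dots> \<le> N w'" using d unfolding dual_def by blast
  also have "N w' = N w" by (rule norm_abs_eq[OF spi]) (simp add: w'_def abs_mult)
  finally show "w \<bullet> (\<chi> j. \<bar>v $ j\<bar>) \<le> N w" .
qed

lemma dual_exists:
  assumes pos: "0 < N ux"
  shows "\<exists>v. dual v \<and> ux \<bullet> v = N ux \<and> (\<forall>j. 0 \<le> v $ j) \<and> (\<forall>b\<in>Bk. \<forall>b'\<in>Bk. v $ b = v $ b')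
            \<and> (\<forall>j\<in>A0. \<forall>b\<in>Bk. v $ b \<le> v $ j)"
proof -
  obtain v0 where v0: "ux \<bullet> v0 = N ux" "dual v0"
    using support_functional[OF nN pos] unfolding dual_def by blast
  define va where "va = (\<chi> j. \<bar>v0 $ j\<bar>)"
  have dva: "dual va" unfolding va_def by (rule dual_abs[OF v0(2)])
  have "ux \<bullet> v0 \<le> ux \<bullet> va" unfolding inner_vec_def va_def
    by (intro sum_mono) (simp add: mult_left_mono ux_nonneg)
  moreover have "ux \<bullet> va \<le> N ux" using dva unfolding dual_def by blast
  ultimately have uva: "ux \<bullet> va = N ux" using v0 by simp
  define G where "G = {p. p permutes Bk}"
  have fG: "finite G" unfolding G_def by (rule finite_permutations) simp
  have cG: "0 < card G" using fG unfolding G_def by (metis card_gt_0_iff empty_iff mem_Collect_eq permutes_id)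
  define vb where "vb = (1 / real (card G)) *\<^sub>R (\<Sum>p\<in>G. (\<chi> j. va $ p j))"
  have vbc: "vb $ j = (\<Sum>p\<in>G. va $ p j) / real (card G)" for j
    unfolding vb_def by simp
  have dvb: "dual vb" unfolding dual_def
  proof
    fix w
    have "w \<bullet> vb = (\<Sum>p\<in>G. w \<bullet> (\<chi> j. va $ p j)) / real (card G)"
      unfolding vb_def by (simp add: inner_sum_right)
    also have "\<dots> \<le> (\<Sum>p\<in>G. N w) / real (card G)"
    proof (intro divide_right_mono sum_mono)
      fix p assume "p \<in> G"
      hence "bij p" unfolding G_def by (simp add: permutes_bij)
      hence "dual (\<chi> j. va $ p j)" by (rule dual_perm[OF dva])
      thus "w \<bullet> (\<chi> j. va $ p j) \<le> N w" unfolding dual_def by blast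
    qed simp
    also have "\<dots> = N w" using cG by (simp only: sum_constant) (auto simp: card_gt_0_iff)
    finally show "w \<bullet> vb \<le> N w" .
  qed
  have uvb: "ux \<bullet> vb = N ux"
  proof -
    have "ux \<bullet> (\<chi> j. va $ p j) = N ux" if "p \<in> G" for p
    proof -
      have pB: "p permutes Bk" using that unfolding G_def by simp
      have ip: "inv p permutes Bk" by (rule permutes_inv[OF pB])
      have "(\<chi> j. ux $ inv p j) = ux"
      proof (subst vec_eq_iff, intro allI)
        fix j
        show "(\<chi> j. ux $ inv p j) $ j = ux $ j"
        proof (cases "j \<in> Bk")
          case True
          hence "inv p j \<in> Bk" using permutes_in_image[OF ip] by simp
          thus ?thesis using True sets_basic by (auto simp: ux_val)
        next
          case False thus ?thesis using permutes_not_in[OF ip] by simp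
        qed
      qed
      hence "ux \<bullet> (\<chi> j. va $ p j) = ux \<bullet> va" using inner_perm[OF permutes_bij[OF pB], of ux va] by simp
      thus ?thesis using uva by simp
    qed
    hence "ux \<bullet> vb = (\<Sum>p\<in>G. N ux) / real (card G)"
      unfolding vb_def by (simp add: inner_sum_right)
    also have "\<dots> = N ux" using cG by (simp only: sum_constant) (auto simp: card_gt_0_iff)
    finally show ?thesis .
  qed
  have vbnn: "\<forall>j. 0 \<le> vb $ j" unfolding vbc va_def by (auto intro: sum_nonneg divide_nonneg_nonneg)
  have vbconst: "\<forall>b\<in>Bk. \<forall>b'\<in>Bk. vb $ b = vb $ b'"
  proof (intro ballI)
    fix b b' assume bb: "b \<in> Bk" "b' \<in> Bk"
    define \<tau> where "\<tau> = Transposition.transpose b b'"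
    have tB: "\<tau> permutes Bk" unfolding \<tau>_def by (rule permutes_swap_id[OF bb])
    have "(\<Sum>p\<in>G. va $ p b) = (\<Sum>q\<in>G. va $ q b')"
    proof (rule sum.reindex_bij_witness[where i="\<lambda>q. q \<circ> \<tau>" and j="\<lambda>q. q \<circ> \<tau>"])
      fix p assume "p \<in> G"
      show "p \<circ> \<tau> \<circ> \<tau> = p" unfolding \<tau>_def by (simp add: o_assoc[symmetric])
      show "p \<circ> \<tau> \<in> G" using \<open>p \<in> G\<close> tB unfolding G_def by (simp add: permutes_compose)
      show "va $ (p \<circ> \<tau>) b' = va $ p b" unfolding \<tau>_def by simp
    qed (use tB in \<open>auto simp: G_def \<tau>_def o_assoc[symmetric] permutes_compose\<close>)
    thus "vb $ b = vb $ b'" unfolding vbc by simp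
  qed
  have vbord: "\<forall>j\<in>A0. \<forall>b\<in>Bk. vb $ b \<le> vb $ j"
  proof (intro ballI)
    fix j b assume jb: "j \<in> A0" "b \<in> Bk"
    show "vb $ b \<le> vb $ j"
    proof (rule ccontr)
      assume lt: "\<not> vb $ b \<le> vb $ j"
      have jnb: "j \<noteq> b" using jb sets_basic by auto
      define \<tau> where "\<tau> = Transposition.transpose j b"
      define vc where "vc = (\<chi> k. vb $ \<tau> k)"
      have "dual vc" unfolding vc_def \<tau>_def by (rule dual_perm[OF dvb]) simp
      hence "ux \<bullet> vc \<le> N ux" unfolding dual_def by blast
      have "ux \<bullet> vc - ux \<bullet> vb = (\<Sum>k\<in>UNIV. ux $ k * (vb $ \<tau> k - vb $ k))"
        unfolding inner_vec_def vc_def by (simp add: sum_subtractf right_diff_distrib)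
      also have "\<dots> = (\<Sum>k\<in>{j, b}. ux $ k * (vb $ \<tau> k - vb $ k))"
        by (rule sum.mono_neutral_right) (auto simp: \<tau>_def)
      also have "\<dots> = (ux $ j - ux $ b) * (vb $ b - vb $ j)"
        using jnb unfolding \<tau>_def by (simp add: algebra_simps)
      finally have eq: "ux \<bullet> vc - ux \<bullet> vb = (ux $ j - ux $ b) * (vb $ b - vb $ j)" .
      have "ux $ j = \<bar>x $ j\<bar>" "ux $ b = dl" using jb sets_basic by (auto simp: ux_val)
      hence "0 < ux $ j - ux $ b" using A0_gt[OF jb(1)] by simp
      moreover have "0 < vb $ b - vb $ j" using lt by simp
      ultimately have "0 < ux \<bullet> vc - ux \<bullet> vb" using eq by simp
      thus False using \<open>ux \<bullet> vc \<le> N ux\<close> uvb by simp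
    qed
  qed
  show ?thesis using dvb uvb vbnn vbconst vbord by blast
qed

end



context thm6
begin

lemma lower_functional:
  assumes pos: "0 < N ux"
  shows "\<exists>y. x \<bullet> y = N ux \<and> (\<forall>z. vcard z \<le> K \<longrightarrow> z \<bullet> y \<le> N z)"
proof -
  obtain v where v: "dual v" "ux \<bullet> v = N ux" "\<forall>j. 0 \<le> v $ j" "\<forall>b\<in>Bk. \<forall>b'\<in>Bk. v $ b = v $ b'"
    "\<forall>j\<in>A0. \<forall>b\<in>Bk. v $ b \<le> v $ j"
    using dual_exists[OF pos] by blast
  have "Bk \<noteq> {}" using card_Bk m_pos by auto
  then obtain b0 where b0: "b0 \<in> Bk" by auto
  define c where "c = v $ b0"
  have vB: "\<And>b. b \<in> Bk \<Longrightarrow> v $ b = c" using v(4) b0 unfolding c_def by blast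
  have vA: "\<And>j. j \<in> A0 \<Longrightarrow> c \<le> v $ j" using v(5) b0 unfolding c_def by blast
  have c0: "0 \<le> c" using v(3) unfolding c_def by blast
  define g where "g j = (if j \<in> A0 then v $ j else c)" for j
  have g0: "0 \<le> g j" for j using v(3) c0 unfolding g_def by auto
  define y where "y = (\<chi> j. sg j * g j)"
  have U: "(UNIV::'n set) = A0 \<union> H" using sets_basic by auto
  have HU: "H = Bk \<union> R" using sets_basic by auto
  have "x \<bullet> y = (\<Sum>j\<in>UNIV. \<bar>x $ j\<bar> * g j)"
    unfolding inner_vec_def y_def sg_def by (intro sum.cong) auto
  also have "\<dots> = (\<Sum>j\<in>A0. \<bar>x $ j\<bar> * g j) + (\<Sum>j\<in>H. \<bar>x $ j\<bar> * g j)"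
    unfolding U by (rule sum.union_disjoint) (use sets_basic in auto)
  also have "(\<Sum>j\<in>A0. \<bar>x $ j\<bar> * g j) = (\<Sum>j\<in>A0. ux $ j * v $ j)"
    by (intro sum.cong) (auto simp: g_def ux_val)
  also have "(\<Sum>j\<in>H. \<bar>x $ j\<bar> * g j) = (\<Sum>j\<in>H. \<bar>x $ j\<bar>) * c"
    unfolding sum_distrib_right using sets_basic by (intro sum.cong) (auto simp: g_def)
  also have "\<dots> = real m * dl * c" using sum_H by simp
  also have "real m * dl * c = (\<Sum>j\<in>H. ux $ j * v $ j)"
  proof -
    have "(\<Sum>j\<in>H. ux $ j * v $ j) = (\<Sum>j\<in>Bk. ux $ j * v $ j) + (\<Sum>j\<in>R. ux $ j * v $ j)"
      unfolding HU by (rule sum.union_disjoint) (use sets_basic in auto)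
    also have "(\<Sum>j\<in>Bk. ux $ j * v $ j) = (\<Sum>j\<in>Bk. dl * c)"
      using sets_basic by (intro sum.cong) (auto simp: ux_val vB)
    also have "(\<Sum>j\<in>R. ux $ j * v $ j) = 0"
      using sets_basic by (intro sum.neutral) (auto simp: ux_val)
    finally show ?thesis using card_Bk by simp
  qed
  also have "(\<Sum>j\<in>A0. ux $ j * v $ j) + (\<Sum>j\<in>H. ux $ j * v $ j) = ux \<bullet> v"
  proof -
    have "ux \<bullet> v = (\<Sum>j\<in>A0 \<union> H. ux $ j * v $ j)" unfolding inner_vec_def U[symmetric] by simp
    also have "\<dots> = (\<Sum>j\<in>A0. ux $ j * v $ j) + (\<Sum>j\<in>H. ux $ j * v $ j)"
      by (rule sum.union_disjoint) (use sets_basic in auto)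
    finally show ?thesis by simp
  qed
  finally have xy: "x \<bullet> y = N ux" using v(2) by simp
  have zy: "z \<bullet> y \<le> N z" if zK: "vcard z \<le> K" for z
  proof -
    define S where "S = {j. z $ j \<noteq> 0}"
    define A where "A = S \<inter> A0"
    define B where "B = S - A0"
    define D where "D = (A0 - A) \<union> Bk"
    have cS: "card S \<le> K" using zK unfolding vcard_def S_def .
    have AA0: "A \<subseteq> A0" unfolding A_def by auto
    have cD: "card D = card A0 - card A + m"
    proof -
      have "card D = card (A0 - A) + card Bk" unfolding D_def
        by (rule card_Un_disjoint) (use sets_basic in auto)
      thus ?thesis using card_Diff_subset[OF finite AA0] card_Bk by simp
    qed
    have cSAB: "card S = card A + card B"
    proof -
      have "S = A \<union> B" unfolding A_def B_def by auto
      moreover have "A \<inter> B = {}" unfolding A_def B_def by auto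
      ultimately show ?thesis by (simp add: card_Un_disjoint)
    qed
    have "card A \<le> card A0" using AA0 by (simp add: card_mono)
    hence cBD: "card B \<le> card D" using cD cSAB cS cardA0m by linarith
    obtain f where f: "f ` B \<subseteq> D" "inj_on f B" using card_le_inj[OF finite finite cBD] by blast
    have fA: "\<And>j. j \<in> B \<Longrightarrow> f j \<notin> A"
    proof -
      fix j assume "j \<in> B"
      hence "f j \<in> D" using f(1) by auto
      moreover have "A0 \<inter> Bk = {}" by (rule sets_basic(7))
      ultimately show "f j \<notin> A" using AA0 unfolding D_def by auto
    qed
    have vf: "\<And>j. j \<in> B \<Longrightarrow> c \<le> v $ f j"
    proof -
      fix j assume "j \<in> B"
      hence "f j \<in> D" using f(1) by auto
      thus "c \<le> v $ f j" unfolding D_def using vA vB by auto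
    qed
    define w where "w = (\<chi> d. if d \<in> A then \<bar>z $ d\<bar> else if d \<in> f ` B then \<bar>z $ inv_into B f d\<bar> else 0)"
    define \<beta> where "\<beta> j = (if j \<in> A then j else f j)" for j
    have wA: "\<And>d. d \<in> A \<Longrightarrow> w $ d = \<bar>z $ d\<bar>" unfolding w_def by simp
    have wB: "\<And>j. j \<in> B \<Longrightarrow> w $ f j = \<bar>z $ j\<bar>" unfolding w_def using fA f(2) by simp
    have SAB: "\<And>j. j \<in> S \<Longrightarrow> j \<notin> A \<Longrightarrow> j \<in> B" unfolding A_def B_def by auto
    have Nw: "N w = N z"
    proof (rule norm_perm_support[OF spi, of \<beta> S])
      show "inj_on \<beta> S"
      proof (rule inj_onI)
        fix a b assume ab: "a \<in> S" "b \<in> S" "\<beta> a = \<beta> b"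
        show "a = b"
        proof (cases "a \<in> A"; cases "b \<in> A")
          assume "a \<notin> A" "b \<notin> A"
          hence "a \<in> B" "b \<in> B" "f a = f b" using ab SAB by (auto simp: \<beta>_def)
          thus ?thesis using f(2) unfolding inj_on_def by blast
        next
          assume "a \<in> A" "b \<notin> A"
          hence "b \<in> B" "\<beta> a \<in> A" "\<beta> b = f b" using ab SAB by (auto simp: \<beta>_def)
          thus ?thesis using fA ab(3) by metis
        next
          assume "a \<notin> A" "b \<in> A"
          hence "a \<in> B" "\<beta> b \<in> A" "\<beta> a = f a" using ab SAB by (auto simp: \<beta>_def)
          thus ?thesis using fA ab(3) by metis
        qed (use ab in \<open>auto simp: \<beta>_def\<close>)
      qed
    next
      fix j assume "j \<in> S"
      thus "\<bar>w $ \<beta> j\<bar> = \<bar>z $ j\<bar>"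
        using wA wB SAB by (cases "j \<in> A") (auto simp: \<beta>_def)
    next
      fix j assume "j \<notin> S" thus "z $ j = 0" unfolding S_def by simp
    next
      fix d assume d: "d \<notin> \<beta> ` S"
      have "A \<subseteq> \<beta> ` S" unfolding A_def \<beta>_def by (auto simp: image_iff A_def)
      moreover have "f ` B \<subseteq> \<beta> ` S"
      proof
        fix e assume "e \<in> f ` B"
        then obtain j where "j \<in> B" "e = f j" by auto
        moreover have "j \<in> S" "j \<notin> A" using \<open>j \<in> B\<close> unfolding A_def B_def by auto
        ultimately show "e \<in> \<beta> ` S" unfolding \<beta>_def by force
      qed
      ultimately show "w $ d = 0" using d unfolding w_def by auto
    qed
    have "z \<bullet> y \<le> (\<Sum>j\<in>UNIV. \<bar>z $ j\<bar> * g j)"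
      unfolding inner_vec_def y_def
    proof (intro sum_mono)
      fix j
      have "z $ j * sg j \<le> \<bar>z $ j\<bar>" using sg_abs(1)[of j] by (metis abs_ge_self abs_mult mult.commute mult_1)
      hence "(z $ j * sg j) * g j \<le> \<bar>z $ j\<bar> * g j" using g0 by (intro mult_right_mono) auto
      thus "z $ j \<bullet> (\<chi> j. sg j * g j) $ j \<le> \<bar>z $ j\<bar> * g j" by (simp add: mult.assoc inner_real_def)
    qed
    also have "(\<Sum>j\<in>UNIV. \<bar>z $ j\<bar> * g j) = (\<Sum>j\<in>S. \<bar>z $ j\<bar> * g j)"
      by (rule sum.mono_neutral_right) (auto simp: S_def)
    also have "\<dots> = (\<Sum>j\<in>A. \<bar>z $ j\<bar> * g j) + (\<Sum>j\<in>B. \<bar>z $ j\<bar> * g j)"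
      unfolding A_def B_def by (rule sum.Int_Diff) simp
    also have "(\<Sum>j\<in>A. \<bar>z $ j\<bar> * g j) = (\<Sum>j\<in>A. w $ j * v $ j)"
      using AA0 wA by (intro sum.cong) (auto simp: g_def)
    also have "(\<Sum>j\<in>B. \<bar>z $ j\<bar> * g j) \<le> (\<Sum>j\<in>B. w $ f j * v $ f j)"
    proof (intro sum_mono)
      fix j assume j: "j \<in> B"
      hence "g j = c" unfolding g_def B_def by auto
      thus "\<bar>z $ j\<bar> * g j \<le> w $ f j * v $ f j" using wB[OF j] vf[OF j] by (simp add: mult_left_mono)
    qed
    also have "(\<Sum>j\<in>B. w $ f j * v $ f j) = (\<Sum>d\<in>f ` B. w $ d * v $ d)"
      using sum.reindex[OF f(2), of "\<lambda>d. w $ d * v $ d"] by simp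
    also have "(\<Sum>j\<in>A. w $ j * v $ j) + (\<Sum>d\<in>f ` B. w $ d * v $ d) = (\<Sum>d\<in>A \<union> f ` B. w $ d * v $ d)"
      by (rule sum.union_disjoint[symmetric]) (use fA in auto)
    also have "\<dots> = (\<Sum>d\<in>UNIV. w $ d * v $ d)"
      by (rule sum.mono_neutral_left) (auto simp: w_def)
    also have "\<dots> = w \<bullet> v" unfolding inner_vec_def by (simp add: inner_real_def)
    also have "\<dots> \<le> N w" using v(1) unfolding dual_def by blast
    finally show ?thesis using Nw by simp
  qed
  show ?thesis using xy zy by blast
qed

lemma lower:
  assumes pos: "0 < N ux" and t: "0 < t" and mem: "(1 / t) *\<^sub>R x \<in> convex hull (NK N K)"
  shows "N ux \<le> t"
proof -
  obtain y where y: "x \<bullet> y = N ux" "\<And>z. vcard z \<le> K \<Longrightarrow> z \<bullet> y \<le> N z"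
    using lower_functional[OF pos] by blast
  have "NK N K \<subseteq> {p. y \<bullet> p \<le> 1}"
  proof
    fix p assume "p \<in> NK N K"
    hence "N p \<le> 1" "vcard p \<le> K" unfolding NK_def by auto
    thus "p \<in> {p. y \<bullet> p \<le> 1}" using y(2)[of p] by (simp add: inner_commute)
  qed
  hence "convex hull (NK N K) \<subseteq> {p. y \<bullet> p \<le> 1}"
    by (intro hull_minimal) (auto simp: convex_halfspace_le)
  hence "y \<bullet> ((1 / t) *\<^sub>R x) \<le> 1" using mem by auto
  hence "(x \<bullet> y) / t \<le> 1" by (simp add: inner_commute)
  thus ?thesis using t y(1) by (simp add: divide_le_eq)
qed

lemma upper_in:
  assumes pos: "0 < N ux"
  shows "(1 / N ux) *\<^sub>R x \<in> convex hull (NK N K)"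
proof -
  let ?E = "{y. N y = N ux \<and> vcard y \<le> K}"
  have "(1 / N ux) *\<^sub>R x \<in> (\<lambda>v. (1 / N ux) *\<^sub>R v) ` (convex hull ?E)" using upper by blast
  also have "\<dots> = convex hull ((\<lambda>v. (1 / N ux) *\<^sub>R v) ` ?E)" by (rule convex_hull_scaling[symmetric])
  also have "\<dots> \<subseteq> convex hull (NK N K)"
  proof (rule hull_mono, rule subsetI)
    fix p assume "p \<in> (\<lambda>v. (1 / N ux) *\<^sub>R v) ` ?E"
    then obtain e where e: "p = (1 / N ux) *\<^sub>R e" "N e = N ux" "vcard e \<le> K" by auto
    have "N p = 1" using e norm_scale[OF nN] pos by simp
    moreover have "vcard p = vcard e" using e pos unfolding vcard_def by simp
    ultimately show "p \<in> NK N K" using e unfolding NK_def by simp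
  qed
  finally show ?thesis .
qed

lemma x_zero:
  assumes "N ux = 0" shows "x = 0"
proof -
  have "{y. N y = N ux \<and> vcard y \<le> K} \<subseteq> {0}"
  proof
    fix y assume "y \<in> {y. N y = N ux \<and> vcard y \<le> K}"
    hence "N y = 0" using assms by simp
    thus "y \<in> {0}" using nN unfolding is_norm_def by simp
  qed
  hence "convex hull {y. N y = N ux \<and> vcard y \<le> K} \<subseteq> {0}"
    by (metis convex_hull_singleton hull_mono)
  thus ?thesis using upper by auto
qed

lemma ux_uvec: "N ux = N (u_vec K x)"
proof -
  define h where "h (j::'n) = inv_into UNIV \<sigma> (idx j + 1)" for j
  have b1: "bij_betw (\<lambda>j::'n. idx j + 1) UNIV {1..CARD('n)}"
  proof -
    have b2: "bij_betw (\<lambda>k::nat. k + 1) {..<CARD('n)} {1..CARD('n)}"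
      by (rule bij_betw_byWitness[where f'="\<lambda>k. k - 1"]) auto
    show ?thesis using bij_betw_trans[OF idx_bij b2] by (simp add: o_def)
  qed
  have "bij_betw h UNIV UNIV"
    using bij_betw_trans[OF b1 bij_betw_inv_into[OF sb]] unfolding h_def by (simp add: o_def)
  moreover have "\<sigma> (h j) = idx j + 1" for j
  proof -
    have "idx j + 1 \<in> range \<sigma>" using b1 sb unfolding bij_betw_def by auto
    thus ?thesis unfolding h_def by (rule f_inv_into_f)
  qed
  ultimately show ?thesis
    by (intro norm_perm_abs[OF spi]) (auto simp: ux_def u_vec_def)
qed

end

theorem mainTheorem6:
  fixes N :: "real^'n \<Rightarrow> real" and K :: nat and x :: "real^'n"
  assumes "1 < K" and "K < CARD('n)"
    and "is_norm N" and "sign_perm_invariant N"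
  shows "gauge_c N K x = N (u_vec K x)"
proof -
  obtain \<sigma> :: "'n \<Rightarrow> nat" where s: "bij_betw \<sigma> UNIV {1..CARD('n)}" "\<And>j. \<bar>x $ j\<bar> = absk x (\<sigma> j)"
    using exists_sigma[of x] by blast
  interpret T: thm6 N K x \<sigma> using assms s by unfold_locales auto
  define G where "G = {t. t > 0 \<and> (1 / t) *\<^sub>R x \<in> convex hull (NK N K)}"
  have gG: "gauge_c N K x = Inf G" unfolding gauge_c_def G_def by simp
  show ?thesis
  proof (cases "0 < N T.ux")
    case True
    have inG: "N T.ux \<in> G" unfolding G_def using True T.upper_in[OF True] by simp
    have bb: "bdd_below G" unfolding G_def by (rule bdd_belowI[of _ 0]) auto
    have "Inf G \<le> N T.ux" by (rule cInf_lower[OF inG bb])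
    moreover have "N T.ux \<le> Inf G"
      by (rule cInf_greatest) (use inG T.lower[OF True] in \<open>auto simp: G_def\<close>)
    ultimately show ?thesis using gG T.ux_uvec by simp
  next
    case False
    hence z: "N T.ux = 0" using norm_nonneg[OF assms(3)] by (simp add: not_less order.antisym)
    hence x0: "x = 0" by (rule T.x_zero)
    have "0 \<in> NK N K" unfolding NK_def vcard_def using norm_zero[OF assms(3)] by simp
    hence "0 \<in> convex hull (NK N K)" by (rule hull_inc)
    hence "G = {0<..}" unfolding G_def x0 by auto
    thus ?thesis using gG z T.ux_uvec by simp
  qed
qed



end
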